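(* Let $d\ge 1$, $n\ge 2$, and let $x_1,\dots,x_n,y$ be independent with $x_i\sim N_d(\mu,\eta^{-1}I_d)$ and $y\sim N_d(\mu,\eta^{-1}I_d)$, where $\mu\in\mathbb{R}^d$ and $\eta=1/\sigma^2>0$ are unknown. Put $\bar x_n=n^{-1}\sum_{i=1}^n x_i$, $s_n=\sum_{i=1}^n\|x_i-\bar x_n\|^2$, $\bar x_{n+1}=(n\bar x_n+y)/(n+1)$ and $s_{n+1}=s_n+n\|y-\bar x_n\|^2/(n+1)$. For a prior $\pi(\mu,\eta)$ and $l\in\{n,n+1\}$, $z\in\mathbb{R}^d$, $v>0$, define $$m_\pi(z,v;l)=\int_0^\infty\!\!\int_{\mathbb{R}^d}\phi(z;\mu,l^{-1}\eta^{-1})\,\eta\,\gamma\{\eta v;(l-1)d\}\,\pi(\mu,\eta)\,d\mu\,d\eta,\qquad \rho_\pi(z,v;l)=v\,m_\pi(z,v;l).$$ Then for any prior $\pi(\mu,\eta)$ the Bayesian predictive density satisfies $$\hat p_\pi(y\mid \bar x_n,s_n)=\frac{\rho_\pi(\bar x_{n+1},s_{n+1};n+1)}{\rho_\pi(\bar x_n,s_n;n)}\,\hat p_R(y\mid\bar x_n,s_n),$$ and, provided the expectations exist, $$R_{KL}\{(\mu,\eta),\hat p_R\}-R_{KL}\{(\mu,\eta),\hat p_\pi\}=E_{(\mu,\eta)}\left\{\log\frac{\rho_\pi(\bar x_{n+1},s_{n+1};n+1)}{\rho_\pi(\bar x_n,s_n;n)}\right\}.$$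
   Context: $\phi(\cdot;\theta,\tau)$ denotes the density of $N_d(\theta,\tau I_d)$; $\gamma(\cdot;k)$ denotes the chi-square density with $k$ degrees of freedom (so $\eta\gamma(\eta v;k)$ is the density of $v\sim\eta^{-1}\chi^2_{k}$). A prior $\pi(\mu,\eta)$ is a nonnegative (possibly improper) density on $\mathbb{R}^d\times(0,\infty)$ with respect to $d\mu\,d\eta$. The Bayesian predictive density with respect to $\pi$ is $$\hat p_\pi(y\mid\bar x_n,s_n)=\frac{\iint \phi(y;\mu,\eta^{-1})\,\phi(\bar x_n;\mu,n^{-1}\eta^{-1})\,\eta\,\gamma\{\eta s_n;(n-1)d\}\,\pi(\mu,\eta)\,d\mu\,d\eta}{\iint \phi(\bar x_n;\mu,n^{-1}\eta^{-1})\,\eta\,\gamma\{\eta s_n;(n-1)d\}\,\pi(\mu,\eta)\,d\mu\,d\eta}.$$ The best equivariant predictive density is $$\hat p_R(y\mid\bar x_n,s_n)=\frac{\Gamma(nd/2)}{\Gamma\{(n-1)d/2\}}\left(\frac{1}{\pi s_n}\frac{n}{n+1}\right)^{d/2}\left(1+\frac{1}{s_n}\frac{n}{n+1}\|y-\bar x_n\|^2\right)^{-nd/2}.$$ The Kullback--Leibler risk of a predictive density $\hat p(y\mid\bar x_n,s_n)$ is $R_{KL}\{(\mu,\eta),\hat p\}=E_{(\mu,\eta)}\left[\log\{\phi(y;\mu,\eta^{-1})/\hat p(y\mid\bar x_n,s_n)\}\right]$, where $E_{(\mu,\eta)}$ denotes expectation with respect to $(y,\bar x_n,s_n)$ under the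 model above. *)

theory Defs
  imports "HOL-Probability.Probability"
begin

definition phi :: "real^'d \<Rightarrow> real^'d \<Rightarrow> real \<Rightarrow> real" where
  "phi y theta tau = (2 * pi * tau) powr (- real CARD('d) / 2)
      * exp (- (norm (y - theta))\<^sup>2 / (2 * tau))"

definition chisq :: "nat \<Rightarrow> real \<Rightarrow> real" where
  "chisq k v = (if v > 0 then v powr (real k / 2 - 1) * exp (- v / 2)
                 / (2 powr (real k / 2) * Gamma (real k / 2)) else 0)"

definition m_pi :: "(real^'d \<Rightarrow> real \<Rightarrow> real) \<Rightarrow> real^'d \<Rightarrow> real \<Rightarrow> nat \<Rightarrow> real" where
  "m_pi prior z v l = (\<integral>p. indicator {0<..} (snd p) *
      phi z (fst p) (1 / (real l * snd p)) * snd p *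
      chisq ((l - 1) * CARD('d)) (snd p * v) * prior (fst p) (snd p)
      \<partial>(lborel :: ((real^'d) \<times> real) measure))"

definition rho_pi :: "(real^'d \<Rightarrow> real \<Rightarrow> real) \<Rightarrow> real^'d \<Rightarrow> real \<Rightarrow> nat \<Rightarrow> real" where
  "rho_pi prior z v l = v * m_pi prior z v l"

definition pred_bayes :: "(real^'d \<Rightarrow> real \<Rightarrow> real) \<Rightarrow> nat \<Rightarrow> real^'d \<Rightarrow> real^'d \<Rightarrow> real \<Rightarrow> real" where
  "pred_bayes prior n y xb s =
     (\<integral>p. indicator {0<..} (snd p) * phi y (fst p) (1 / snd p) *
        phi xb (fst p) (1 / (real n * snd p)) * snd p *
        chisq ((n - 1) * CARD('d)) (snd p * s) * prior (fst p) (snd p)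
        \<partial>(lborel :: ((real^'d) \<times> real) measure))
   / (\<integral>p. indicator {0<..} (snd p) *
        phi xb (fst p) (1 / (real n * snd p)) * snd p *
        chisq ((n - 1) * CARD('d)) (snd p * s) * prior (fst p) (snd p)
        \<partial>(lborel :: ((real^'d) \<times> real) measure))"

text \<open>Best equivariant predictive density p_R(y | xb, s).\<close>
definition pred_R :: "nat \<Rightarrow> real^'d \<Rightarrow> real^'d \<Rightarrow> real \<Rightarrow> real" where
  "pred_R n y xb s =
     Gamma (real (n * CARD('d)) / 2) / Gamma (real ((n - 1) * CARD('d)) / 2)
     * (1 / (pi * s) * (real n / (real n + 1))) powr (real CARD('d) / 2)
     * (1 + 1 / s * (real n / (real n + 1)) * (norm (y - xb))\<^sup>2)
         powr (- real (n * CARD('d)) / 2)"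

definition xbar :: "nat \<Rightarrow> (nat \<Rightarrow> real^'d) \<Rightarrow> real^'d" where
  "xbar n xs = (1 / real n) *\<^sub>R (\<Sum>i<n. xs i)"

definition ssum :: "nat \<Rightarrow> (nat \<Rightarrow> real^'d) \<Rightarrow> real" where
  "ssum n xs = (\<Sum>i<n. (norm (xs i - xbar n xs))\<^sup>2)"

definition xbar_next :: "nat \<Rightarrow> real^'d \<Rightarrow> real^'d \<Rightarrow> real^'d" where
  "xbar_next n xb y = (1 / (real n + 1)) *\<^sub>R (real n *\<^sub>R xb + y)"

definition s_next :: "nat \<Rightarrow> real^'d \<Rightarrow> real \<Rightarrow> real^'d \<Rightarrow> real" where
  "s_next n xb s y = s + real n * (norm (y - xb))\<^sup>2 / (real n + 1)"

definition normal_vec :: "real^'d \<Rightarrow> real \<Rightarrow> (real^'d) measure" where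
  "normal_vec mu tau = density lborel (\<lambda>x. ennreal (phi x mu tau))"

definition model :: "nat \<Rightarrow> real^'d \<Rightarrow> real \<Rightarrow> ((nat \<Rightarrow> real^'d) \<times> (real^'d)) measure" where
  "model n mu eta = (PiM {..<n} (\<lambda>_. normal_vec mu (1 / eta))) \<Otimes>\<^sub>M normal_vec mu (1 / eta)"

definition R_KL :: "nat \<Rightarrow> real^'d \<Rightarrow> real \<Rightarrow> (real^'d \<Rightarrow> real^'d \<Rightarrow> real \<Rightarrow> real) \<Rightarrow> real" where
  "R_KL n mu eta p = (\<integral>w. ln (phi (snd w) mu (1 / eta) / p (snd w) (xbar n (fst w)) (ssum n (fst w)))
                        \<partial>model n mu eta)"

end

theory Submission
  imports Defs
begin
lemma powpart:
  fixes et s q N D K M Gk Gn :: real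
  assumes et: "et>0" and s: "s>0" and q: "q\<ge>0" and N: "N\<ge>1" and D: "D>0"
   and K: "K = (N-1) * D" and M: "M = N * D" and Gk: "Gk>0" and Gn: "Gn>0"
  shows "(2 * pi * (1/et)) powr (-D/2)  *  (2 * pi * (1/(N * et))) powr (-D/2)  *  et  * 
          ((et * s) powr (K/2-1) / (2 powr (K/2)  *  Gk))
       = (s + N * q/(N+1))/s  *  (Gn/Gk  *  (1/(pi * s) * (N/(N+1))) powr (D/2)  *  (1 + 1/s * (N/(N+1)) * q) powr (-M/2))
          *  ((2 * pi * (1/((N+1) * et))) powr (-D/2)  *  et  *  ((et * (s + N * q/(N+1))) powr (M/2-1) / (2 powr (M/2)  *  Gn)))"
proof -
  define t where "t = s + N * q/(N+1)"
  have t: "t > 0" using s q N unfolding t_def by (simp add: add_pos_nonneg)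
  have t2: "1 + 1/s * (N/(N+1)) * q = t/s" proof -
    have "s + N * s>0" "s>0" "1+N>0" using N s by (auto intro: add_pos_pos)
    then show ?thesis unfolding t_def by (simp add: field_simps)
  qed
  show ?thesis unfolding t_def[symmetric] t2
    using et s t N D Gk Gn pi_gt_zero
    apply (subst ln_inj_iff[symmetric])
    apply (simp_all add: ln_mult ln_div ln_powr)
    apply (simp add: K M field_simps)
    apply (simp add: algebra_simps)?
    done
qed

lemma norm_ident:
  fixes y xb mu :: "real^'d" and n :: nat
  shows "(norm (y - mu))\<^sup>2 + real n * (norm (xb - mu))\<^sup>2
       = (real n + 1) * (norm (xbar_next n xb y - mu))\<^sup>2 + real n / (real n + 1) * (norm (y - xb))\<^sup>2"
proof -
  define a where "a = y - mu"
  define b where "b = xb - mu"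
  have N: "real n + 1 > 0" by simp
  have e1: "xbar_next n xb y - mu = (1/(real n + 1)) *\<^sub>R (real n *\<^sub>R b + a)"
    unfolding xbar_next_def a_def b_def using N
    by (simp add: algebra_simps scaleR_add_right) (simp add: scaleR_diff_right[symmetric] field_simps scaleR_add_left[symmetric])
  have e2: "y - xb = a - b" unfolding a_def b_def by simp
  have h: "(real n + 1) * ((norm a)\<^sup>2 + real n * (norm b)\<^sup>2) = (norm (real n *\<^sub>R b + a))\<^sup>2 + real n * (norm (a - b))\<^sup>2"
    unfolding power2_norm_eq_inner
    by (simp add: inner_add_left inner_add_right inner_diff_left inner_diff_right inner_commute algebra_simps)
  have h2: "(norm ((1/(real n + 1)) *\<^sub>R (real n *\<^sub>R b + a)))\<^sup>2 = (norm (real n *\<^sub>R b + a))\<^sup>2 / (real n + 1)^2"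
    using N by (simp add: power_mult_distrib power_divide)
  define c where "c = real n + 1"
  have c: "c > 0" unfolding c_def by simp
  have "(norm (y - mu))\<^sup>2 + real n * (norm (xb - mu))\<^sup>2
       = c * ((norm (real n *\<^sub>R b + a))\<^sup>2 / c^2) + real n / c * (norm (a - b))\<^sup>2"
  proof -
    have "(norm (y - mu))\<^sup>2 + real n * (norm (xb - mu))\<^sup>2 = (c * ((norm a)\<^sup>2 + real n * (norm b)\<^sup>2)) / c"
      using c unfolding a_def b_def by simp
    also have "\<dots> = ((norm (real n *\<^sub>R b + a))\<^sup>2 + real n * (norm (a - b))\<^sup>2) / c"
      using h[folded c_def] by simp
    also have "\<dots> = c * ((norm (real n *\<^sub>R b + a))\<^sup>2 / c^2) + real n / c * (norm (a - b))\<^sup>2"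
      using c by (simp add: field_simps power2_eq_square)
    finally show ?thesis .
  qed
  then show ?thesis unfolding e1 e2 h2 c_def by simp
qed

lemma pointwise:
  fixes y xb mu :: "real^'d" and n :: nat and et s :: real
  assumes n2: "n \<ge> 2" and et: "et > 0" and s: "s > 0"
  shows "phi y mu (1 / et) * phi xb mu (1 / (real n * et)) * et * chisq ((n - 1) * CARD('d)) (et * s)
       = (s_next n xb s y / s * pred_R n y xb s) *
         (phi (xbar_next n xb y) mu (1 / (real (n + 1) * et)) * et * chisq ((n + 1 - 1) * CARD('d)) (et * s_next n xb s y))"
proof -
  define N where "N = real n"
  define D where "D = real CARD('d)"
  define q where "q = (norm (y - xb))\<^sup>2"
  define A where "A = (norm (y - mu))\<^sup>2"
  define B where "B = (norm (xb - mu))\<^sup>2"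
  define C where "C = (norm (xbar_next n xb y - mu))\<^sup>2"
  have N1: "N \<ge> 1" using n2 unfolding N_def by simp
  have D0: "D > 0" unfolding D_def by simp
  have q0: "q \<ge> 0" unfolding q_def by simp
  have id: "A + N * B = (N + 1) * C + N / (N + 1) * q"
    using norm_ident[of y mu n xb] unfolding A_def B_def C_def q_def N_def by simp
  define t where "t = s + N * q / (N + 1)"
  have st: "s_next n xb s y = t" unfolding s_next_def t_def N_def q_def by simp
  have t0: "t > 0" unfolding t_def using s q0 N1 by (simp add: add_pos_nonneg)
  have K: "real ((n - 1) * CARD('d)) = (N - 1) * D" using n2 unfolding N_def D_def by (simp add: of_nat_diff)
  have M: "real (n * CARD('d)) = N * D" unfolding N_def D_def by simp
  have nn: "n + 1 - 1 = n" by simp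
  have Gk: "Gamma ((N - 1) * D / 2) > 0" using N1 D0 n2 unfolding N_def by (intro Gamma_real_pos) simp
  have Gn: "Gamma (N * D / 2) > 0" using N1 D0 by (intro Gamma_real_pos) simp
  have pw: "(2*pi*(1/et)) powr (-D/2) * (2*pi*(1/(N*et))) powr (-D/2) * et *
          ((et * s) powr (((N-1)*D)/2-1) / (2 powr (((N-1)*D)/2) * Gamma ((N - 1) * D / 2)))
       = t/s * (Gamma (N * D / 2)/Gamma ((N - 1) * D / 2) * (1/(pi * s)*(N/(N+1))) powr (D/2) * (1 + 1/s * (N/(N+1))*q) powr (-(N*D)/2))
         * ((2*pi*(1/((N+1)*et))) powr (-D/2) * et * ((et*t) powr ((N*D)/2-1) / (2 powr ((N*D)/2) * Gamma (N * D / 2))))"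
    unfolding t_def by (rule powpart[OF et s q0 N1 D0 refl refl Gk Gn])
  have ex: "exp (- A / (2 * (1/et))) * exp (- B / (2 * (1/(N*et)))) * exp (- (et * s) / 2)
          = exp (- C / (2 * (1/((N+1)*et)))) * exp (- (et * t) / 2)"
  proof -
    have "- A / (2 * (1/et)) + - B / (2 * (1/(N*et))) + - (et * s) / 2
        = - C / (2 * (1/((N+1)*et))) + - (et * t) / 2"
    proof -
      have "- A / (2 * (1/et)) + - B / (2 * (1/(N*et))) + - (et * s) / 2 = - et / 2 * (A + N * B + s)"
        by (simp add: field_simps)
      also have "\<dots> = - et / 2 * ((N + 1) * C + s + N / (N + 1) * q)" using id by simp
      also have "\<dots> = - C / (2 * (1/((N+1)*et))) + - (et * t) / 2"
        unfolding t_def using N1 by (simp add: field_simps)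
      finally show ?thesis .
    qed
    then show ?thesis by (simp add: exp_add[symmetric])
  qed
  have ets: "et * s > 0" "et * t > 0" using et s t0 by auto
  have n1: "real (n + 1) = N + 1" unfolding N_def by simp
  let ?pL = "(2*pi*(1/et)) powr (-D/2) * (2*pi*(1/(N*et))) powr (-D/2) * et *
          ((et * s) powr (((N-1)*D)/2-1) / (2 powr (((N-1)*D)/2) * Gamma ((N - 1) * D / 2)))"
  let ?pR = "t/s * (Gamma (N * D / 2)/Gamma ((N - 1) * D / 2) * (1/(pi * s)*(N/(N+1))) powr (D/2) * (1 + 1/s * (N/(N+1))*q) powr (-(N*D)/2))
         * ((2*pi*(1/((N+1)*et))) powr (-D/2) * et * ((et*t) powr ((N*D)/2-1) / (2 powr ((N*D)/2) * Gamma (N * D / 2))))"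
  let ?eL = "exp (- A / (2 * (1/et))) * exp (- B / (2 * (1/(N*et)))) * exp (- (et * s) / 2)"
  let ?eR = "exp (- C / (2 * (1/((N+1)*et)))) * exp (- (et * t) / 2)"
  have main: "(2 * pi * (1 / et)) powr (- D / 2) * exp (- A / (2 * (1 / et))) *
        ((2 * pi * (1 / (N * et))) powr (- D / 2) *
         exp (- B / (2 * (1 / (N * et))))) *
        et *
        ((et * s) powr ((N - 1) * D / 2 - 1) * exp (- (et * s) / 2) /
         (2 powr ((N - 1) * D / 2) * Gamma ((N - 1) * D / 2))) =
        t / s *
        (Gamma (N * D / 2) / Gamma ((N - 1) * D / 2) *
         (1 / (pi * s) * (N / (N + 1))) powr (D / 2) *
         (1 + 1 / s * (N / (N + 1)) * q) powr (- (N * D) / 2)) *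
        ((2 * pi * (1 / ((N + 1) * et))) powr (- D / 2) *
         exp (- C / (2 * (1 / ((N + 1) * et)))) *
         et *
         ((et * t) powr (N * D / 2 - 1) * exp (- (et * t) / 2) /
          (2 powr (N * D / 2) * Gamma (N * D / 2))))"
  proof -
    have "(2 * pi * (1 / et)) powr (- D / 2) * exp (- A / (2 * (1 / et))) *
        ((2 * pi * (1 / (N * et))) powr (- D / 2) *
         exp (- B / (2 * (1 / (N * et))))) *
        et *
        ((et * s) powr ((N - 1) * D / 2 - 1) * exp (- (et * s) / 2) /
         (2 powr ((N - 1) * D / 2) * Gamma ((N - 1) * D / 2))) = ?pL * ?eL"
      by (simp only: divide_inverse ac_simps)
    also have "\<dots> = ?pR * ?eR" unfolding pw ex ..
    also have "\<dots> = t / s *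
        (Gamma (N * D / 2) / Gamma ((N - 1) * D / 2) *
         (1 / (pi * s) * (N / (N + 1))) powr (D / 2) *
         (1 + 1 / s * (N / (N + 1)) * q) powr (- (N * D) / 2)) *
        ((2 * pi * (1 / ((N + 1) * et))) powr (- D / 2) *
         exp (- C / (2 * (1 / ((N + 1) * et)))) *
         et *
         ((et * t) powr (N * D / 2 - 1) * exp (- (et * t) / 2) /
          (2 powr (N * D / 2) * Gamma (N * D / 2))))"
      by (simp only: divide_inverse ac_simps)
    finally show ?thesis .
  qed
  show ?thesis
    unfolding st nn
    unfolding phi_def chisq_def pred_R_def
    using ets
    apply (simp only: if_True)
    unfolding A_def[symmetric] B_def[symmetric] C_def[symmetric] q_def[symmetric] K M
      N_def[symmetric] D_def[symmetric] n1
    by (rule main)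
qed

lemma ssum_nonneg: "ssum n xs \<ge> 0"
  unfolding ssum_def by (simp add: sum_nonneg)

lemma phi_pos: "tau > 0 \<Longrightarrow> phi y mu tau > 0"
  unfolding phi_def by simp

lemma predR_pos:
  fixes y xb :: "real^'d"
  assumes n2: "n \<ge> 2" and s: "s > 0"
  shows "pred_R n y xb s > 0"
proof -
  have a: "real (n * CARD('d)) / 2 > 0" using n2 by (simp add: zero_less_mult_iff zero_less_card_finite)
  have b: "real ((n - 1) * CARD('d)) / 2 > 0" using n2 by (simp add: zero_less_mult_iff zero_less_card_finite)
  have c: "1 / (pi * s) * (real n / (real n + 1)) > 0" using s n2 by simp
  have d: "1 + 1 / s * (real n / (real n + 1)) * (norm (y - xb))\<^sup>2 > 0"
    using s by (intro add_pos_nonneg) auto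
  show ?thesis unfolding pred_R_def
    apply (intro mult_pos_pos divide_pos_pos)
    using Gamma_real_pos[OF a] Gamma_real_pos[OF b] c d by (simp_all only: powr_gt_zero)
qed

lemma part1':
  fixes prior :: "real^'d \<Rightarrow> real \<Rightarrow> real" and n :: nat and xb y :: "real^'d" and s :: real
  assumes n2: "n \<ge> 2" and s0: "s \<ge> 0"
  shows "pred_bayes prior n y xb s
            = rho_pi prior (xbar_next n xb y) (s_next n xb s y) (n + 1)
              / rho_pi prior xb s n
              * pred_R n y xb s"
proof (cases "s = 0")
    case True
    then show ?thesis by (simp add: pred_bayes_def rho_pi_def chisq_def)
  next
    case False
    then have s: "s > 0" using s0 by simp
    define F where "F = s_next n xb s y / s * pred_R n y xb s"
    have eq: "\<And>p::(real^'d)\<times>real. indicator {0<..} (snd p) * phi y (fst p) (1 / snd p) *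
        phi xb (fst p) (1 / (real n * snd p)) * snd p *
        chisq ((n - 1) * CARD('d)) (snd p * s) * prior (fst p) (snd p)
      = F * (indicator {0<..} (snd p) *
      phi (xbar_next n xb y) (fst p) (1 / (real (n+1) * snd p)) * snd p *
      chisq ((n + 1 - 1) * CARD('d)) (snd p * s_next n xb s y) * prior (fst p) (snd p))"
    proof -
      fix p :: "(real^'d)\<times>real"
      show "?thesis p"
      proof (cases "snd p > 0")
        case True
        have "phi y (fst p) (1 / snd p) * phi xb (fst p) (1 / (real n * snd p)) * snd p *
          chisq ((n - 1) * CARD('d)) (snd p * s) = F * (phi (xbar_next n xb y) (fst p) (1 / (real (n+1) * snd p)) * snd p *
      chisq ((n + 1 - 1) * CARD('d)) (snd p * s_next n xb s y))"
          unfolding F_def by (rule pointwise[OF n2 True s])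
        then show ?thesis using True by (simp add: mult_ac)
      next
        case False
        then show ?thesis by simp
      qed
    qed
    have num: "(\<integral>p. indicator {0<..} (snd p) * phi y (fst p) (1 / snd p) *
        phi xb (fst p) (1 / (real n * snd p)) * snd p *
        chisq ((n - 1) * CARD('d)) (snd p * s) * prior (fst p) (snd p)
        \<partial>(lborel :: ((real^'d) \<times> real) measure)) = F * m_pi prior (xbar_next n xb y) (s_next n xb s y) (n+1)"
      unfolding eq m_pi_def by (rule integral_mult_right_zero)
    have "pred_bayes prior n y xb s = F * m_pi prior (xbar_next n xb y) (s_next n xb s y) (n+1) / m_pi prior xb s n"
      unfolding pred_bayes_def num m_pi_def ..
    then show ?thesis unfolding rho_pi_def F_def by (simp add: divide_inverse mult_ac)
qed

lemma part1:
  fixes prior :: "real^'d \<Rightarrow> real \<Rightarrow> real" and n :: nat and xs :: "nat \<Rightarrow> real^'d" and y :: "real^'d"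
  assumes n2: "n \<ge> 2"
  shows "pred_bayes prior n y (xbar n xs) (ssum n xs)
            = rho_pi prior (xbar_next n (xbar n xs) y) (s_next n (xbar n xs) (ssum n xs) y) (n + 1)
              / rho_pi prior (xbar n xs) (ssum n xs) n
              * pred_R n y (xbar n xs) (ssum n xs)"
  by (rule part1'[OF n2 ssum_nonneg])

theorem theorem1:
  fixes prior :: "real^'d \<Rightarrow> real \<Rightarrow> real" and n :: nat
  assumes n2: "n \<ge> 2"
    and prior_nonneg: "\<And>mu eta. prior mu eta \<ge> 0"
    and prior_meas: "(\<lambda>p. prior (fst p) (snd p)) \<in> borel_measurable (lborel :: ((real^'d) \<times> real) measure)"
  shows "(\<forall>(xs :: nat \<Rightarrow> real^'d) y.
            pred_bayes prior n y (xbar n xs) (ssum n xs)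
            = rho_pi prior (xbar_next n (xbar n xs) y) (s_next n (xbar n xs) (ssum n xs) y) (n + 1)
              / rho_pi prior (xbar n xs) (ssum n xs) n
              * pred_R n y (xbar n xs) (ssum n xs))
      \<and> (\<forall>(mu :: real^'d) (eta :: real).
           eta > 0
           \<longrightarrow> integrable (model n mu eta)
                 (\<lambda>w. ln (phi (snd w) mu (1 / eta) / pred_R n (snd w) (xbar n (fst w)) (ssum n (fst w))))
           \<longrightarrow> integrable (model n mu eta)
                 (\<lambda>w. ln (phi (snd w) mu (1 / eta) / pred_bayes prior n (snd w) (xbar n (fst w)) (ssum n (fst w))))
           \<longrightarrow> integrable (model n mu eta)
                 (\<lambda>w. ln (rho_pi prior (xbar_next n (xbar n (fst w)) (snd w))
                                 (s_next n (xbar n (fst w)) (ssum n (fst w)) (snd w)) (n + 1)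
                          / rho_pi prior (xbar n (fst w)) (ssum n (fst w)) n))
           \<longrightarrow> (AE w in model n mu eta.
                  rho_pi prior (xbar_next n (xbar n (fst w)) (snd w))
                         (s_next n (xbar n (fst w)) (ssum n (fst w)) (snd w)) (n + 1)
                  / rho_pi prior (xbar n (fst w)) (ssum n (fst w)) n > 0)
           \<longrightarrow> R_KL n mu eta (pred_R n) - R_KL n mu eta (pred_bayes prior n)
               = (\<integral>w. ln (rho_pi prior (xbar_next n (xbar n (fst w)) (snd w))
                                 (s_next n (xbar n (fst w)) (ssum n (fst w)) (snd w)) (n + 1)
                          / rho_pi prior (xbar n (fst w)) (ssum n (fst w)) n)
                   \<partial>model n mu eta))"
proof (intro conjI allI impI)
  fix xs :: "nat \<Rightarrow> real^'d" and y :: "real^'d"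
  show "pred_bayes prior n y (xbar n xs) (ssum n xs)
            = rho_pi prior (xbar_next n (xbar n xs) y) (s_next n (xbar n xs) (ssum n xs) y) (n + 1)
              / rho_pi prior (xbar n xs) (ssum n xs) n
              * pred_R n y (xbar n xs) (ssum n xs)" by (rule part1[OF n2])
next
  fix mu :: "real^'d" and eta :: real
  assume eta: "eta > 0"
  define r where "r = (\<lambda>w::(nat \<Rightarrow> real^'d) \<times> (real^'d). rho_pi prior (xbar_next n (xbar n (fst w)) (snd w))
                                 (s_next n (xbar n (fst w)) (ssum n (fst w)) (snd w)) (n + 1)
                          / rho_pi prior (xbar n (fst w)) (ssum n (fst w)) n)"
  define f1 where "f1 = (\<lambda>w::(nat \<Rightarrow> real^'d) \<times> (real^'d). ln (phi (snd w) mu (1 / eta) / pred_R n (snd w) (xbar n (fst w)) (ssum n (fst w))))"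
  define f2 where "f2 = (\<lambda>w::(nat \<Rightarrow> real^'d) \<times> (real^'d). ln (phi (snd w) mu (1 / eta) / pred_bayes prior n (snd w) (xbar n (fst w)) (ssum n (fst w))))"
  assume i1: "integrable (model n mu eta)
                 (\<lambda>w. ln (phi (snd w) mu (1 / eta) / pred_R n (snd w) (xbar n (fst w)) (ssum n (fst w))))"
    and i2: "integrable (model n mu eta)
                 (\<lambda>w. ln (phi (snd w) mu (1 / eta) / pred_bayes prior n (snd w) (xbar n (fst w)) (ssum n (fst w))))"
    and i3: "integrable (model n mu eta)
                 (\<lambda>w. ln (rho_pi prior (xbar_next n (xbar n (fst w)) (snd w))
                                 (s_next n (xbar n (fst w)) (ssum n (fst w)) (snd w)) (n + 1)
                          / rho_pi prior (xbar n (fst w)) (ssum n (fst w)) n))"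
    and ae: "AE w in model n mu eta.
                  rho_pi prior (xbar_next n (xbar n (fst w)) (snd w))
                         (s_next n (xbar n (fst w)) (ssum n (fst w)) (snd w)) (n + 1)
                  / rho_pi prior (xbar n (fst w)) (ssum n (fst w)) n > 0"
  have I1: "integrable (model n mu eta) f1" using i1 unfolding f1_def .
  have I2: "integrable (model n mu eta) f2" using i2 unfolding f2_def .
  have I3: "integrable (model n mu eta) (\<lambda>w. ln (r w))" using i3 unfolding r_def .
  have AE: "AE w in model n mu eta. r w > 0" using ae unfolding r_def .
  have pt: "f1 w - f2 w = ln (r w)" if rpos: "r w > 0" for w
  proof -
    let ?xb = "xbar n (fst w)" and ?s = "ssum n (fst w)"
    have "rho_pi prior ?xb ?s n \<noteq> 0" using rpos unfolding r_def by auto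
    then have "?s \<noteq> 0" unfolding rho_pi_def by auto
    then have sp: "?s > 0" using ssum_nonneg[of n "fst w"] by simp
    have pR: "pred_R n (snd w) ?xb ?s > 0" by (rule predR_pos[OF n2 sp])
    have pB: "pred_bayes prior n (snd w) ?xb ?s = r w * pred_R n (snd w) ?xb ?s"
      unfolding r_def using part1[OF n2, where prior=prior and xs="fst w" and y="snd w"] by simp
    have ph: "phi (snd w) mu (1 / eta) > 0" using eta by (intro phi_pos) simp
    show ?thesis unfolding f1_def f2_def pB using pR ph rpos
      by (simp add: ln_div ln_mult)
  qed
  have "R_KL n mu eta (pred_R n) - R_KL n mu eta (pred_bayes prior n)
      = integral\<^sup>L (model n mu eta) f1 - integral\<^sup>L (model n mu eta) f2"
    unfolding R_KL_def f1_def f2_def ..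
  also have "\<dots> = (\<integral>w. f1 w - f2 w \<partial>model n mu eta)"
    using I1 I2 by simp
  also have "\<dots> = (\<integral>w. ln (r w) \<partial>model n mu eta)"
    apply (rule integral_cong_AE)
    using I1 I2 I3 apply (auto intro!: borel_measurable_diff)[2]
    using AE pt by (auto elim!: AE_mp)
  finally show "R_KL n mu eta (pred_R n) - R_KL n mu eta (pred_bayes prior n)
               = (\<integral>w. ln (rho_pi prior (xbar_next n (xbar n (fst w)) (snd w))
                                 (s_next n (xbar n (fst w)) (ssum n (fst w)) (snd w)) (n + 1)
                          / rho_pi prior (xbar n (fst w)) (ssum n (fst w)) n)
                   \<partial>model n mu eta)" unfolding r_def .
qed

end
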